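(* Let $\beta\in\mathbb{R}$ and let $\mu$ be a finite Radon measure on $\mathbb{R}^d$ with $\mu\in\dot{B}^{\beta-d}_{\infty,\infty}(\mathbb{R}^d)$. Then there exists a constant $C=C(d)$ such that for all $R>0$, $$\frac{1}{R^{d-\beta}}\int_{B(0,R)}|\widehat{\mu}(\xi)|^2\,d\xi\le C\,\|\mu\|_{M_b}\,\|\mu\|_{\dot{B}^{\beta-d}_{\infty,\infty}}.$$
   Context: $p_t(x)=(4\pi t)^{-d/2}e^{-|x|^2/(4t)}$. $\|\mu\|_{\dot{B}^{\beta-d}_{\infty,\infty}}:=\sup_{t>0}t^{\frac{d-\beta}{2}}\|p_t*\mu\|_{L^\infty}$. $\|\mu\|_{M_b}=|\mu|(\mathbb{R}^d)$. $\widehat{\mu}(\xi)=\int e^{-2\pi i x\cdot\xi}\,d\mu(x)$, and $B(0,R)$ is the open Euclidean ball of radius $R$ centered at $0$. *)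

theory Defs
  imports "HOL-Analysis.Analysis"
begin

text \<open>A finite signed Radon measure mu on R^d is represented by its polar decomposition
  mu = h |mu|, where nu = |mu| is a finite Borel measure and h is Borel with |h| = 1.
  Then the total variation norm of mu is  measure nu UNIV.\<close>

definition heat_kernel :: "real \<Rightarrow> 'a::euclidean_space \<Rightarrow> real" where
  "heat_kernel t x = (4 * pi * t) powr (- real DIM('a) / 2) * exp (- (norm x)\<^sup>2 / (4 * t))"

definition heat_conv :: "'a::euclidean_space measure \<Rightarrow> ('a \<Rightarrow> real) \<Rightarrow> real \<Rightarrow> 'a \<Rightarrow> real" where
  "heat_conv \<nu> h t x = (\<integral>y. heat_kernel t (x - y) * h y \<partial>\<nu>)"

definition heat_linf :: "'a::euclidean_space measure \<Rightarrow> ('a \<Rightarrow> real) \<Rightarrow> real \<Rightarrow> real" where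
  "heat_linf \<nu> h t = (SUP x. \<bar>heat_conv \<nu> h t x\<bar>)"

definition besov_set :: "real \<Rightarrow> 'a::euclidean_space measure \<Rightarrow> ('a \<Rightarrow> real) \<Rightarrow> real set" where
  "besov_set \<beta> \<nu> h = (\<lambda>t. t powr ((real DIM('a) - \<beta>) / 2) * heat_linf \<nu> h t) ` {0<..}"

definition in_besov :: "real \<Rightarrow> 'a::euclidean_space measure \<Rightarrow> ('a \<Rightarrow> real) \<Rightarrow> bool" where
  "in_besov \<beta> \<nu> h \<longleftrightarrow> (\<forall>t>0. bdd_above (range (\<lambda>x. \<bar>heat_conv \<nu> h t x\<bar>))) \<and> bdd_above (besov_set \<beta> \<nu> h)"

definition besov_norm :: "real \<Rightarrow> 'a::euclidean_space measure \<Rightarrow> ('a \<Rightarrow> real) \<Rightarrow> real" where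
  "besov_norm \<beta> \<nu> h = Sup (besov_set \<beta> \<nu> h)"

definition fourier_meas :: "'a::euclidean_space measure \<Rightarrow> ('a \<Rightarrow> real) \<Rightarrow> 'a \<Rightarrow> complex" where
  "fourier_meas \<nu> h \<xi> = (\<integral>x. complex_of_real (h x) * cis (- 2 * pi * (x \<bullet> \<xi>)) \<partial>\<nu>)"

end

theory Submission imports Defs "HOL-Probability.Probability" begin

lemma gauss1:
  fixes s z :: real assumes s: "s > 0"
  shows "(\<integral>\<xi>. complex_of_real (exp (- (4 * pi\<^sup>2 * s) * \<xi>\<^sup>2)) * cis (- 2 * pi * z * \<xi>) \<partial>lborel)
     = complex_of_real (1 / sqrt (4 * pi * s) * exp (- z\<^sup>2 / (4 * s)))"
proof -
  define c where "c = sqrt (8 * pi\<^sup>2 * s)"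
  have c: "c > 0" using s by (simp add: c_def)
  have c2: "c\<^sup>2 = 8 * pi\<^sup>2 * s" using s by (simp add: c_def)
  define t where "t = - 2 * pi * z / c"
  have "complex_of_real (exp (- (t^2) / 2)) = char std_normal_distribution t"
    by (simp add: char_std_normal_distribution)
  also have "\<dots> = (\<integral>x. std_normal_density x *\<^sub>R iexp (t * x) \<partial>lborel)"
    unfolding char_def by (subst integral_density) auto
  also have "\<dots> = c *\<^sub>R (\<integral>x. std_normal_density (0 + c * x) *\<^sub>R iexp (t * (0 + c * x)) \<partial>lborel)"
    using lborel_integral_real_affine[of c "\<lambda>x. std_normal_density x *\<^sub>R iexp (t * x)" 0] c by simp
  also have "(\<lambda>x. std_normal_density (0 + c * x) *\<^sub>R iexp (t * (0 + c * x))) =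
     (\<lambda>x. complex_of_real (1 / sqrt (2 * pi)) * (complex_of_real (exp (- (4 * pi\<^sup>2 * s) * x\<^sup>2)) * cis (- 2 * pi * z * x)))"
  proof
    fix x
    have e: "- (c * x)\<^sup>2 / 2 = - (4 * pi\<^sup>2 * s) * x\<^sup>2" using c2 by (simp add: power_mult_distrib)
    have "t * (c * x) = - 2 * pi * z * x" using c by (simp add: t_def)
    then have i: "iexp (t * (0 + c * x)) = cis (- 2 * pi * z * x)"
      by (simp add: cis_conv_exp mult.commute)
    have d: "std_normal_density (0 + c * x) = 1 / sqrt (2 * pi) * exp (- (4 * pi\<^sup>2 * s) * x\<^sup>2)"
      unfolding std_normal_density_def using e by simp
    show "std_normal_density (0 + c * x) *\<^sub>R iexp (t * (0 + c * x)) =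
     complex_of_real (1 / sqrt (2 * pi)) * (complex_of_real (exp (- (4 * pi\<^sup>2 * s) * x\<^sup>2)) * cis (- 2 * pi * z * x))"
      unfolding i d scaleR_conv_of_real by simp
  qed
  also have "c *\<^sub>R (\<integral>x. complex_of_real (1 / sqrt (2 * pi)) * (complex_of_real (exp (- (4 * pi\<^sup>2 * s) * x\<^sup>2)) * cis (- 2 * pi * z * x)) \<partial>lborel)
     = complex_of_real (c / sqrt (2 * pi)) * (\<integral>\<xi>. complex_of_real (exp (- (4 * pi\<^sup>2 * s) * \<xi>\<^sup>2)) * cis (- 2 * pi * z * \<xi>) \<partial>lborel)"
    by (simp add: scaleR_conv_of_real)
  finally have eq: "complex_of_real (exp (- t\<^sup>2 / 2)) = complex_of_real (c / sqrt (2 * pi)) * (\<integral>\<xi>. complex_of_real (exp (- (4 * pi\<^sup>2 * s) * \<xi>\<^sup>2)) * cis (- 2 * pi * z * \<xi>) \<partial>lborel)" .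
  have t2: "t\<^sup>2 / 2 = z\<^sup>2 / (4 * s)"
  proof -
    have "t\<^sup>2 = 4 * pi\<^sup>2 * z\<^sup>2 / c\<^sup>2" by (simp add: t_def power_divide power_mult_distrib)
    also have "\<dots> = 4 * pi\<^sup>2 * z\<^sup>2 / (8 * pi\<^sup>2 * s)" by (simp only: c2)
    also have "\<dots> = z\<^sup>2 / (2 * s)" using s by (simp add: divide_simps)
    finally show ?thesis by simp
  qed
  have k: "sqrt (2 * pi) / c = 1 / sqrt (4 * pi * s)"
  proof -
    have "sqrt (2 * pi) * sqrt (4 * pi * s) = sqrt (8 * pi\<^sup>2 * s)"
      by (simp add: real_sqrt_mult[symmetric] power2_eq_square algebra_simps)
    then show ?thesis using c s by (simp add: c_def field_simps)
  qed
  have cnz: "complex_of_real (c / sqrt (2 * pi)) \<noteq> 0" using c by simp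
  define I where "I = (\<integral>\<xi>. complex_of_real (exp (- (4 * pi\<^sup>2 * s) * \<xi>\<^sup>2)) * cis (- 2 * pi * z * \<xi>) \<partial>lborel)"
  have eq2: "complex_of_real (exp (- t\<^sup>2 / 2)) = complex_of_real (c / sqrt (2 * pi)) * I"
    using eq unfolding I_def .
  have "I = complex_of_real (exp (- t\<^sup>2 / 2)) / complex_of_real (c / sqrt (2 * pi))"
    using cnz eq2 by (simp add: nonzero_eq_divide_eq mult.commute)
  also have "\<dots> = complex_of_real (exp (- t\<^sup>2 / 2) / (c / sqrt (2 * pi)))"
    by (simp only: of_real_divide)
  also have "exp (- t\<^sup>2 / 2) / (c / sqrt (2 * pi)) = sqrt (2 * pi) / c * exp (- t\<^sup>2 / 2)"
    using c by (metis div_by_1 divide_divide_eq_right divide_divide_times_eq mult.commute)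
  also have "- t\<^sup>2 / 2 = - z\<^sup>2 / (4 * s)" using t2 by simp
  finally show ?thesis unfolding I_def k .
qed

lemma cis_sum: "finite I \<Longrightarrow> cis (\<Sum>i\<in>I. f i) = (\<Prod>i\<in>I. cis (f i))"
  by (induction I rule: finite_induct) (auto simp: cis_mult[symmetric])

lemma borel_cis: "cis \<in> borel_measurable borel"
  by (rule borel_measurable_continuous_onI) (intro continuous_intros)

lemma measurable_cis[measurable]: "f \<in> borel_measurable M \<Longrightarrow> (\<lambda>x. cis (f x)) \<in> borel_measurable M"
  using measurable_compose[OF _ borel_cis] by blast

lemma gauss1_integrable:
  fixes a z :: real assumes a: "a > 0"
  shows "integrable lborel (\<lambda>\<xi>. complex_of_real (exp (- a * \<xi>\<^sup>2)) * cis (- 2 * pi * z * \<xi>))"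
proof -
  define \<sigma> where "\<sigma> = sqrt (1 / (2 * a))"
  have \<sigma>2: "\<sigma>\<^sup>2 = 1 / (2 * a)" using a by (simp add: \<sigma>_def)
  have "integrable lborel (\<lambda>x. sqrt (2 * pi * \<sigma>\<^sup>2) * normal_density 0 \<sigma> x)"
    using integrable_normal_density[of \<sigma> 0] a by (simp add: \<sigma>_def)
  moreover have "sqrt (2 * pi * \<sigma>\<^sup>2) * normal_density 0 \<sigma> x = exp (- a * x\<^sup>2)" for x
  proof -
    have "(x - 0)\<^sup>2 / (2 * \<sigma>\<^sup>2) = a * x\<^sup>2" using a by (simp add: \<sigma>2)
    moreover have "sqrt (2 * pi * \<sigma>\<^sup>2) \<noteq> 0" using a by (simp add: \<sigma>2)
    ultimately show ?thesis unfolding normal_density_def by simp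
  qed
  ultimately have i: "integrable lborel (\<lambda>x. exp (- a * x\<^sup>2))" by simp
  show ?thesis
    by (rule Bochner_Integration.integrable_bound[OF i]) (auto simp: norm_mult)
qed

lemma gaussd:
  fixes z :: "'a::euclidean_space" and s :: real assumes s: "s > 0"
  shows "integrable lborel (\<lambda>\<xi>::'a. complex_of_real (exp (- (4 * pi\<^sup>2 * s) * (norm \<xi>)\<^sup>2)) * cis (- 2 * pi * (z \<bullet> \<xi>)))"
    and "(\<integral>\<xi>. complex_of_real (exp (- (4 * pi\<^sup>2 * s) * (norm \<xi>)\<^sup>2)) * cis (- 2 * pi * (z \<bullet> \<xi>)) \<partial>lborel)
     = complex_of_real (heat_kernel s z)"
proof -
  interpret product_sigma_finite "\<lambda>_::'a. lborel :: real measure" by standard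
  define g where "g = (\<lambda>\<xi>::'a. complex_of_real (exp (- (4 * pi\<^sup>2 * s) * (norm \<xi>)\<^sup>2)) * cis (- 2 * pi * (z \<bullet> \<xi>)))"
  define f where "f = (\<lambda>b::'a. \<lambda>x::real. complex_of_real (exp (- (4 * pi\<^sup>2 * s) * x\<^sup>2)) * cis (- 2 * pi * (z \<bullet> b) * x))"
  define T where "T = (\<lambda>f. \<Sum>b\<in>(Basis::'a set). f b *\<^sub>R b)"
  have Tm: "T \<in> measurable (\<Pi>\<^sub>M b\<in>Basis. lborel) borel" unfolding T_def by measurable
  have gm: "g \<in> borel_measurable borel" unfolding g_def by measurable
  have gT: "g (T x) = (\<Prod>b\<in>Basis. f b (x b))" for x
  proof -
    have n: "(norm (T x))\<^sup>2 = (\<Sum>b\<in>Basis. (x b)\<^sup>2)"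
      unfolding T_def power2_norm_eq_inner
      by (simp add: inner_sum_left inner_sum_right inner_Basis if_distrib cong: if_cong) (simp add: power2_eq_square)
    have i: "z \<bullet> T x = (\<Sum>b\<in>Basis. (z \<bullet> b) * x b)"
      unfolding T_def by (simp add: inner_sum_right mult.commute)
    have "g (T x) = complex_of_real (exp (\<Sum>b\<in>Basis. - (4 * pi\<^sup>2 * s) * (x b)\<^sup>2)) * cis (\<Sum>b\<in>Basis. - 2 * pi * (z \<bullet> b) * x b)"
      unfolding g_def n i by (simp add: sum_distrib_left mult.assoc)
    also have "\<dots> = (\<Prod>b\<in>Basis. f b (x b))"
      unfolding f_def exp_sum[OF finite_Basis] cis_sum[OF finite_Basis] of_real_prod prod.distrib ..
    finally show ?thesis .
  qed
  have fi: "integrable lborel (f b)" for b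
    unfolding f_def using gauss1_integrable[of "4 * pi\<^sup>2 * s" "z \<bullet> b"] s by simp
  have L: "lborel = distr (\<Pi>\<^sub>M b\<in>Basis. lborel) borel T" unfolding T_def by (rule lborel_eq)
  have "integrable (\<Pi>\<^sub>M b\<in>Basis. lborel) (\<lambda>x. \<Prod>b\<in>Basis. f b (x b))"
    by (rule product_integrable_prod) (auto intro: fi)
  then show "integrable lborel g"
    unfolding L by (subst integrable_distr_eq[OF Tm gm]) (simp add: gT)
  have "integral\<^sup>L lborel g = (\<integral>x. (\<Prod>b\<in>Basis. f b (x b)) \<partial>(\<Pi>\<^sub>M b\<in>Basis. lborel))"
    unfolding L by (subst integral_distr[OF Tm gm]) (simp add: gT)
  also have "\<dots> = (\<Prod>b\<in>Basis. integral\<^sup>L lborel (f b))"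
    by (rule product_integral_prod) (auto intro: fi)
  also have "\<dots> = (\<Prod>b\<in>(Basis::'a set). complex_of_real (1 / sqrt (4 * pi * s) * exp (- (z \<bullet> b)\<^sup>2 / (4 * s))))"
    unfolding f_def using gauss1[OF s] by simp
  also have "\<dots> = complex_of_real ((1 / sqrt (4 * pi * s)) ^ DIM('a) * exp (- (\<Sum>b\<in>Basis. (z \<bullet> b)\<^sup>2) / (4 * s)))"
  proof -
    have "(\<Prod>b\<in>(Basis::'a set). 1 / sqrt (4 * pi * s) * exp (- (z \<bullet> b)\<^sup>2 / (4 * s)))
       = (1 / sqrt (4 * pi * s)) ^ DIM('a) * (\<Prod>b\<in>(Basis::'a set). exp (- (z \<bullet> b)\<^sup>2 / (4 * s)))"
      by (simp only: prod.distrib prod_constant)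
    also have "(\<Prod>b\<in>(Basis::'a set). exp (- (z \<bullet> b)\<^sup>2 / (4 * s))) = exp (\<Sum>b\<in>(Basis::'a set). - (z \<bullet> b)\<^sup>2 / (4 * s))"
      by (simp add: exp_sum)
    also have "(\<Sum>b\<in>(Basis::'a set). - (z \<bullet> b)\<^sup>2 / (4 * s)) = - (\<Sum>b\<in>Basis. (z \<bullet> b)\<^sup>2) / (4 * s)"
      by (simp add: sum_divide_distrib[symmetric] sum_negf)
    finally show ?thesis unfolding of_real_prod[symmetric] by simp
  qed
  also have "(\<Sum>b\<in>Basis. (z \<bullet> b)\<^sup>2) = (norm z)\<^sup>2"
    unfolding power2_norm_eq_inner euclidean_inner[of z z] by (simp add: power2_eq_square)
  also have "(1 / sqrt (4 * pi * s)) ^ DIM('a) = (4 * pi * s) powr (- real DIM('a) / 2)"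
  proof -
    have p: "4 * pi * s > 0" using s by simp
    have "(1 / sqrt (4 * pi * s)) ^ DIM('a) = ((4 * pi * s) powr (- 1 / 2)) ^ DIM('a)"
      using p by (simp add: powr_minus_divide powr_half_sqrt)
    also have "\<dots> = (4 * pi * s) powr (- real DIM('a) / 2)"
      using p s by (subst powr_power) simp_all
    finally show ?thesis .
  qed
  finally show "integral\<^sup>L lborel g = complex_of_real (heat_kernel s z)"
    unfolding heat_kernel_def by simp
qed

lemma fub:
  fixes G :: "'a::euclidean_space \<Rightarrow> real" and k :: "'a \<Rightarrow> 'b \<Rightarrow> complex"
  assumes fin: "finite_measure \<nu>"
  and Gi: "integrable lborel G"
  and km: "(\<lambda>p. k (fst p) (snd p)) \<in> borel_measurable (lborel \<Otimes>\<^sub>M \<nu>)"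
  and kb: "\<And>\<xi> x. norm (k \<xi> x) \<le> B"
  shows "(\<integral>\<xi>. complex_of_real (G \<xi>) * (\<integral>x. k \<xi> x \<partial>\<nu>) \<partial>lborel) = (\<integral>x. (\<integral>\<xi>. complex_of_real (G \<xi>) * k \<xi> x \<partial>lborel) \<partial>\<nu>)"
proof -
  interpret N: finite_measure \<nu> by (rule fin)
  interpret pair_sigma_finite lborel \<nu> by standard
  have Gm[measurable]: "G \<in> borel_measurable lborel" using Gi by (rule borel_measurable_integrable)
  have km'[measurable]: "(\<lambda>p. k (fst p) (snd p)) \<in> borel_measurable (lborel \<Otimes>\<^sub>M \<nu>)" by (rule km)
  define F where "F = (\<lambda>p. complex_of_real (G (fst p)) * k (fst p) (snd p))"
  have Fm[measurable]: "F \<in> borel_measurable (lborel \<Otimes>\<^sub>M \<nu>)" unfolding F_def by measurable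
  have B0: "0 \<le> B" using kb[of undefined undefined] by (meson norm_ge_zero order_trans)
  have kxm: "(\<lambda>x. k \<xi> x) \<in> borel_measurable \<nu>" for \<xi>
    using measurable_Pair2[OF km', of \<xi>] by simp
  have kxi: "integrable \<nu> (\<lambda>x. k \<xi> x)" for \<xi>
    by (rule N.integrable_const_bound[where B=B]) (auto simp: kb kxm)
  have Fint: "integrable (lborel \<Otimes>\<^sub>M \<nu>) F"
  proof (rule Fubini_integrable)
    show "F \<in> borel_measurable (lborel \<Otimes>\<^sub>M \<nu>)" by (rule Fm)
    have m1: "(\<lambda>\<xi>. \<integral>x. norm (F (\<xi>, x)) \<partial>\<nu>) \<in> borel_measurable lborel"
      by measurable
    show "integrable lborel (\<lambda>\<xi>. \<integral>x. norm (F (\<xi>, x)) \<partial>\<nu>)"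
    proof (rule Bochner_Integration.integrable_bound[OF integrable_mult_right[OF integrable_norm[OF Gi], of "B * measure \<nu> (space \<nu>)"] m1])
      show "AE \<xi> in lborel. norm (\<integral>x. norm (F (\<xi>, x)) \<partial>\<nu>) \<le> norm (B * measure \<nu> (space \<nu>) * norm (G \<xi>))"
      proof (rule AE_I2)
        fix \<xi>
        have "norm (\<integral>x. norm (F (\<xi>, x)) \<partial>\<nu>) = (\<integral>x. norm (F (\<xi>, x)) \<partial>\<nu>)"
          by (simp add: integral_nonneg_AE)
        also have "\<dots> \<le> (\<integral>x. norm (G \<xi>) * B \<partial>\<nu>)"
          unfolding F_def using kxi[of \<xi>]
          by (intro integral_mono) (auto simp: norm_mult kb mult_left_mono)
        also have "\<dots> = B * measure \<nu> (space \<nu>) * norm (G \<xi>)" by simp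
        also have "\<dots> \<le> norm (B * measure \<nu> (space \<nu>) * norm (G \<xi>))" by simp
        finally show "norm (\<integral>x. norm (F (\<xi>, x)) \<partial>\<nu>) \<le> norm (B * measure \<nu> (space \<nu>) * norm (G \<xi>))" .
      qed
    qed
    show "AE \<xi> in lborel. integrable \<nu> (\<lambda>x. F (\<xi>, x))"
      unfolding F_def using kxi by auto
  qed
  have "(\<integral>\<xi>. complex_of_real (G \<xi>) * (\<integral>x. k \<xi> x \<partial>\<nu>) \<partial>lborel) = (\<integral>\<xi>. (\<integral>x. F (\<xi>, x) \<partial>\<nu>) \<partial>lborel)"
    unfolding F_def by simp
  also have "\<dots> = (\<integral>x. (\<integral>\<xi>. F (\<xi>, x) \<partial>lborel) \<partial>\<nu>)"
    using Fubini_integral[of "\<lambda>\<xi> x. F (\<xi>, x)"] Fint by simp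
  finally show ?thesis unfolding F_def by simp
qed

theorem lemma3p2:
  "\<exists>C::real. \<forall>(\<beta>::real) (\<nu>::'a::euclidean_space measure) (h::'a \<Rightarrow> real) (R::real).
     sets \<nu> = sets borel \<longrightarrow> finite_measure \<nu> \<longrightarrow> h \<in> borel_measurable borel \<longrightarrow>
     (\<forall>x. \<bar>h x\<bar> = 1) \<longrightarrow> in_besov \<beta> \<nu> h \<longrightarrow> R > 0 \<longrightarrow>
     (1 / R powr (real DIM('a) - \<beta>)) * (LINT \<xi>:ball 0 R|lborel. (cmod (fourier_meas \<nu> h \<xi>))\<^sup>2)
       \<le> C * measure \<nu> UNIV * besov_norm \<beta> \<nu> h"
proof (intro exI allI impI)
  fix \<beta> :: real and \<nu> :: "'a measure" and h :: "'a \<Rightarrow> real" and R :: real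
  assume s\<nu>: "sets \<nu> = sets borel" and fin: "finite_measure \<nu>" and hm[measurable]: "h \<in> borel_measurable borel"
    and h1: "\<forall>x. \<bar>h x\<bar> = 1" and besov: "in_besov \<beta> \<nu> h" and R: "R > 0"
  interpret N: finite_measure \<nu> by (rule fin)
  have space: "space \<nu> = UNIV" using sets_eq_imp_space_eq[OF s\<nu>] by simp
  have m\<nu>: "borel_measurable \<nu> = borel_measurable borel"
    by (rule measurable_cong_sets[OF s\<nu> refl])
  have mp: "borel_measurable (lborel \<Otimes>\<^sub>M \<nu>) = borel_measurable (lborel \<Otimes>\<^sub>M (borel :: 'a measure))"
    by (rule measurable_cong_sets[OF sets_pair_measure_cong[OF refl s\<nu>] refl])
  define s where "s = 1 / R\<^sup>2"
  have s: "s > 0" using R by (simp add: s_def)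
  define m where "m = measure \<nu> UNIV"
  have m0: "m \<ge> 0" by (simp add: m_def)
  define F where "F = fourier_meas \<nu> h"
  define G where "G = (\<lambda>\<xi>::'a. exp (- (4 * pi\<^sup>2 * s) * (norm \<xi>)\<^sup>2))"
  define hc where "hc = heat_conv \<nu> h s"
  define L where "L = heat_linf \<nu> h s"
  define e where "e = (\<lambda>x \<xi>::'a. complex_of_real (h x) * cis (- 2 * pi * (x \<bullet> \<xi>)))"
  have e_m: "(\<lambda>p. e (snd p) (fst p)) \<in> borel_measurable (lborel \<Otimes>\<^sub>M \<nu>)"
    unfolding mp e_def by measurable
  have e_norm: "norm (e x \<xi>) = 1" for x \<xi> using h1 by (simp add: e_def norm_mult)
  have Fm[measurable]: "F \<in> borel_measurable lborel"
  proof -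
    have "(\<lambda>\<xi>. \<integral>x. e x \<xi> \<partial>\<nu>) \<in> borel_measurable lborel"
      using e_m by (intro N.borel_measurable_lebesgue_integral) (simp add: case_prod_beta')
    then show ?thesis unfolding F_def fourier_meas_def e_def .
  qed
  have Fcm[measurable]: "(\<lambda>\<xi>. cnj (F \<xi>)) \<in> borel_measurable borel"
  proof -
    have Fb: "F \<in> borel_measurable borel" using Fm by simp
    have "cnj \<in> borel_measurable borel"
      by (rule borel_measurable_continuous_onI) (intro continuous_intros)
    then show ?thesis using measurable_compose[OF Fb] by blast
  qed
  have F_norm: "norm (F \<xi>) \<le> m" for \<xi>
  proof -
    have "norm (F \<xi>) \<le> (\<integral>x. norm (e x \<xi>) \<partial>\<nu>)"
      unfolding F_def fourier_meas_def e_def by (rule integral_norm_bound)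
    also have "\<dots> = m" by (simp add: e_norm m_def space)
    finally show ?thesis .
  qed
  have Gi: "integrable lborel G"
  proof -
    have "integrable lborel (\<lambda>\<xi>::'a. norm (complex_of_real (exp (- (4 * pi\<^sup>2 * s) * (norm \<xi>)\<^sup>2)) * cis (- 2 * pi * (0 \<bullet> \<xi>))))"
      using gaussd(1)[OF s, of 0] by (rule integrable_norm)
    then show ?thesis unfolding G_def by (simp add: norm_mult)
  qed
  have Gm[measurable]: "G \<in> borel_measurable lborel" unfolding G_def by measurable
  have G0: "G \<xi> \<ge> 0" for \<xi> by (simp add: G_def)
  have hc_eq: "(\<integral>\<xi>. complex_of_real (G \<xi>) * (cis (- 2 * pi * (x \<bullet> \<xi>)) * cnj (F \<xi>)) \<partial>lborel) = complex_of_real (hc x)" for x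
  proof -
    define k where "k = (\<lambda>\<xi> y. complex_of_real (h y) * cis (- 2 * pi * ((x - y) \<bullet> \<xi>)))"
    have k_m: "(\<lambda>p. k (fst p) (snd p)) \<in> borel_measurable (lborel \<Otimes>\<^sub>M \<nu>)"
      unfolding mp k_def by measurable
    have k_norm: "norm (k \<xi> y) \<le> 1" for \<xi> y using h1 by (simp add: k_def norm_mult)
    have c: "cis (- 2 * pi * (x \<bullet> \<xi>)) * cnj (F \<xi>) = (\<integral>y. k \<xi> y \<partial>\<nu>)" for \<xi>
    proof -
      have "cnj (F \<xi>) = (\<integral>y. cnj (complex_of_real (h y) * cis (- 2 * pi * (y \<bullet> \<xi>))) \<partial>\<nu>)"
        unfolding F_def fourier_meas_def by (rule Bochner_Integration.integral_cnj[symmetric])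
      also have "\<dots> = (\<integral>y. complex_of_real (h y) * cis (2 * pi * (y \<bullet> \<xi>)) \<partial>\<nu>)"
        by (simp add: cis_cnj)
      finally have "cis (- 2 * pi * (x \<bullet> \<xi>)) * cnj (F \<xi>) = (\<integral>y. cis (- 2 * pi * (x \<bullet> \<xi>)) * (complex_of_real (h y) * cis (2 * pi * (y \<bullet> \<xi>))) \<partial>\<nu>)"
        by simp
      also have "\<dots> = (\<integral>y. k \<xi> y \<partial>\<nu>)"
      proof (rule Bochner_Integration.integral_cong[OF refl])
        fix y
        have "cis (- 2 * pi * (x \<bullet> \<xi>)) * cis (2 * pi * (y \<bullet> \<xi>)) = cis (- 2 * pi * ((x - y) \<bullet> \<xi>))"
          by (simp add: cis_mult inner_diff_left algebra_simps)
        then show "cis (- 2 * pi * (x \<bullet> \<xi>)) * (complex_of_real (h y) * cis (2 * pi * (y \<bullet> \<xi>))) = k \<xi> y"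
          unfolding k_def by (metis mult.left_commute)
      qed
      finally show ?thesis .
    qed
    have "(\<integral>\<xi>. complex_of_real (G \<xi>) * (cis (- 2 * pi * (x \<bullet> \<xi>)) * cnj (F \<xi>)) \<partial>lborel)
        = (\<integral>\<xi>. complex_of_real (G \<xi>) * (\<integral>y. k \<xi> y \<partial>\<nu>) \<partial>lborel)"
      unfolding c ..
    also have "\<dots> = (\<integral>y. (\<integral>\<xi>. complex_of_real (G \<xi>) * k \<xi> y \<partial>lborel) \<partial>\<nu>)"
      by (rule fub[OF fin Gi k_m k_norm])
    also have "\<dots> = (\<integral>y. complex_of_real (heat_kernel s (x - y) * h y) \<partial>\<nu>)"
    proof (rule Bochner_Integration.integral_cong[OF refl])
      fix y
      have "(\<integral>\<xi>. complex_of_real (G \<xi>) * k \<xi> y \<partial>lborel)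
          = (\<integral>\<xi>. complex_of_real (h y) * (complex_of_real (exp (- (4 * pi\<^sup>2 * s) * (norm \<xi>)\<^sup>2)) * cis (- 2 * pi * ((x - y) \<bullet> \<xi>))) \<partial>lborel)"
        unfolding G_def k_def by (simp add: mult.left_commute)
      also have "\<dots> = complex_of_real (h y) * complex_of_real (heat_kernel s (x - y))"
        by (simp only: integral_mult_right_zero gaussd(2)[OF s])
      finally show "(\<integral>\<xi>. complex_of_real (G \<xi>) * k \<xi> y \<partial>lborel) = complex_of_real (heat_kernel s (x - y) * h y)"
        by simp
    qed
    also have "\<dots> = complex_of_real (hc x)"
      unfolding hc_def heat_conv_def by (simp only: integral_complex_of_real)
    finally show ?thesis .
  qed
  have K: "(\<integral>\<xi>. complex_of_real (G \<xi>) * (F \<xi> * cnj (F \<xi>)) \<partial>lborel) = complex_of_real (\<integral>x. h x * hc x \<partial>\<nu>)"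
  proof -
    define k where "k = (\<lambda>\<xi> x. e x \<xi> * cnj (F \<xi>))"
    have k_m: "(\<lambda>p. k (fst p) (snd p)) \<in> borel_measurable (lborel \<Otimes>\<^sub>M \<nu>)"
      unfolding k_def using e_m by measurable
    have k_norm: "norm (k \<xi> y) \<le> m" for \<xi> y using F_norm[of \<xi>] by (simp add: k_def norm_mult e_norm)
    have "(\<integral>\<xi>. complex_of_real (G \<xi>) * (F \<xi> * cnj (F \<xi>)) \<partial>lborel)
        = (\<integral>\<xi>. complex_of_real (G \<xi>) * (\<integral>x. k \<xi> x \<partial>\<nu>) \<partial>lborel)"
      unfolding k_def F_def fourier_meas_def e_def by simp
    also have "\<dots> = (\<integral>x. (\<integral>\<xi>. complex_of_real (G \<xi>) * k \<xi> x \<partial>lborel) \<partial>\<nu>)"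
      by (rule fub[OF fin Gi k_m k_norm])
    also have "\<dots> = (\<integral>x. complex_of_real (h x * hc x) \<partial>\<nu>)"
    proof (rule Bochner_Integration.integral_cong[OF refl])
      fix x
      have "(\<integral>\<xi>. complex_of_real (G \<xi>) * k \<xi> x \<partial>lborel)
         = (\<integral>\<xi>. complex_of_real (h x) * (complex_of_real (G \<xi>) * (cis (- 2 * pi * (x \<bullet> \<xi>)) * cnj (F \<xi>))) \<partial>lborel)"
        unfolding k_def e_def by (simp add: mult.left_commute mult.assoc)
      also have "\<dots> = complex_of_real (h x) * complex_of_real (hc x)"
        by (simp only: integral_mult_right_zero hc_eq)
      finally show "(\<integral>\<xi>. complex_of_real (G \<xi>) * k \<xi> x \<partial>lborel) = complex_of_real (h x * hc x)" by simp
    qed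
    also have "\<dots> = complex_of_real (\<integral>x. h x * hc x \<partial>\<nu>)" by (simp only: integral_complex_of_real)
    finally show ?thesis .
  qed
  have K2: "(\<integral>\<xi>. G \<xi> * (cmod (F \<xi>))\<^sup>2 \<partial>lborel) = (\<integral>x. h x * hc x \<partial>\<nu>)"
  proof -
    have "complex_of_real (\<integral>\<xi>. G \<xi> * (cmod (F \<xi>))\<^sup>2 \<partial>lborel) = (\<integral>\<xi>. complex_of_real (G \<xi> * (cmod (F \<xi>))\<^sup>2) \<partial>lborel)"
      by (simp only: integral_complex_of_real)
    also have "\<dots> = (\<integral>\<xi>. complex_of_real (G \<xi>) * (F \<xi> * cnj (F \<xi>)) \<partial>lborel)"
      by (simp only: of_real_mult complex_norm_square)
    finally show ?thesis unfolding K by simp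
  qed
  show "(1 / R powr (real DIM('a) - \<beta>)) * (LINT \<xi>:ball 0 R|lborel. (cmod (fourier_meas \<nu> h \<xi>))\<^sup>2)
       \<le> exp (4 * pi\<^sup>2) * measure \<nu> UNIV * besov_norm \<beta> \<nu> h"
  proof -
    define p where "p = real DIM('a) - \<beta>"
    have bdd1: "bdd_above (range (\<lambda>x. \<bar>hc x\<bar>))"
      using besov s unfolding in_besov_def hc_def by simp
    have hcL: "\<bar>hc x\<bar> \<le> L" for x
      unfolding L_def heat_linf_def hc_def[symmetric] by (rule cSUP_upper[OF UNIV_I bdd1])
    have L0: "L \<ge> 0" using hcL[of undefined] by linarith
    have I1: "(\<integral>x. h x * hc x \<partial>\<nu>) \<le> (\<integral>x. L \<partial>\<nu>)"
    proof (rule integral_mono_AE')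
      show "integrable \<nu> (\<lambda>x. L)" by simp
      show "AE x in \<nu>. h x * hc x \<le> L"
      proof (rule AE_I2)
        fix x
        have "h x * hc x \<le> \<bar>h x * hc x\<bar>" by simp
        also have "\<dots> = \<bar>hc x\<bar>" using h1 by (simp add: abs_mult)
        finally show "h x * hc x \<le> L" using hcL[of x] by linarith
      qed
      show "AE x in \<nu>. 0 \<le> L" using L0 by simp
    qed
    have I1': "(\<integral>x. h x * hc x \<partial>\<nu>) \<le> m * L"
      using I1 by (simp add: m_def space mult.commute)
    have bdd2: "bdd_above (besov_set \<beta> \<nu> h)" using besov unfolding in_besov_def by simp
    have "s powr ((real DIM('a) - \<beta>) / 2) * L \<in> besov_set \<beta> \<nu> h"
      unfolding besov_set_def L_def using s by auto
    then have bL: "s powr (p / 2) * L \<le> besov_norm \<beta> \<nu> h"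
      unfolding besov_norm_def p_def by (rule cSup_upper[OF _ bdd2])
    have sp: "s powr (p / 2) = 1 / R powr p"
    proof -
      have "s = R powr (-2)" using R by (simp add: s_def powr_minus_divide powr_realpow)
      then have "s powr (p / 2) = R powr (- p)" using R by (simp add: powr_powr)
      then show ?thesis by (simp add: powr_minus_divide)
    qed
    have Rp: "R powr p > 0" using R by simp
    have bL2: "L \<le> R powr p * besov_norm \<beta> \<nu> h"
      using bL Rp unfolding sp by (simp add: field_simps)
    define E where "E = exp (4 * pi\<^sup>2)"
    have E0: "E > 0" by (simp add: E_def)
    have GFi: "integrable lborel (\<lambda>\<xi>. E * (G \<xi> * (cmod (F \<xi>))\<^sup>2))"
    proof -
      have "integrable lborel (\<lambda>\<xi>. G \<xi> * (cmod (F \<xi>))\<^sup>2)"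
      proof (rule Bochner_Integration.integrable_bound[OF integrable_mult_right[OF Gi, of "m\<^sup>2"]])
        show "(\<lambda>\<xi>. G \<xi> * (cmod (F \<xi>))\<^sup>2) \<in> borel_measurable lborel" by measurable
        show "AE \<xi> in lborel. norm (G \<xi> * (cmod (F \<xi>))\<^sup>2) \<le> norm (m\<^sup>2 * G \<xi>)"
        proof (rule AE_I2)
          fix \<xi>
          have "(cmod (F \<xi>))\<^sup>2 \<le> m\<^sup>2" using F_norm[of \<xi>] by (simp add: power_mono)
          then have "G \<xi> * (cmod (F \<xi>))\<^sup>2 \<le> G \<xi> * m\<^sup>2" using G0[of \<xi>] by (rule mult_left_mono)
          then show "norm (G \<xi> * (cmod (F \<xi>))\<^sup>2) \<le> norm (m\<^sup>2 * G \<xi>)"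
            using G0[of \<xi>] by (simp add: abs_mult mult.commute)
        qed
      qed
      then show ?thesis by simp
    qed
    have I2: "(LINT \<xi>:ball 0 R|lborel. (cmod (F \<xi>))\<^sup>2) \<le> (\<integral>\<xi>. E * (G \<xi> * (cmod (F \<xi>))\<^sup>2) \<partial>lborel)"
      unfolding set_lebesgue_integral_def
    proof (rule integral_mono_AE'[OF GFi])
      show "AE \<xi> in lborel. 0 \<le> E * (G \<xi> * (cmod (F \<xi>))\<^sup>2)"
        using E0 G0 by simp
      show "AE \<xi> in lborel. indicator (ball 0 R) \<xi> *\<^sub>R (cmod (F \<xi>))\<^sup>2 \<le> E * (G \<xi> * (cmod (F \<xi>))\<^sup>2)"
      proof (rule AE_I2)
        fix \<xi> :: 'a
        show "indicator (ball 0 R) \<xi> *\<^sub>R (cmod (F \<xi>))\<^sup>2 \<le> E * (G \<xi> * (cmod (F \<xi>))\<^sup>2)"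
        proof (cases "\<xi> \<in> ball 0 R")
          case True
          then have "norm \<xi> < R" by simp
          then have "(norm \<xi>)\<^sup>2 \<le> R\<^sup>2" by (simp add: power_mono)
          then have "s * (norm \<xi>)\<^sup>2 \<le> 1" using R by (simp add: s_def field_simps)
          then have "4 * pi\<^sup>2 * (s * (norm \<xi>)\<^sup>2) \<le> 4 * pi\<^sup>2" by (simp add: mult_left_le)
          then have "1 \<le> E * G \<xi>"
            unfolding E_def G_def by (simp add: exp_add[symmetric] mult.assoc)
          then have "(cmod (F \<xi>))\<^sup>2 \<le> E * G \<xi> * (cmod (F \<xi>))\<^sup>2"
            by (simp add: mult_le_cancel_right1)
          then show ?thesis using True by (simp add: mult.assoc)
        next
          case False
          then show ?thesis using E0 G0[of \<xi>] by simp
        qed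
      qed
    qed
    have "(1 / R powr p) * (LINT \<xi>:ball 0 R|lborel. (cmod (F \<xi>))\<^sup>2)
        \<le> (1 / R powr p) * (E * (\<integral>x. h x * hc x \<partial>\<nu>))"
      using I2 Rp unfolding K2[symmetric] by (simp add: divide_right_mono)
    also have "\<dots> \<le> (1 / R powr p) * (E * (m * (R powr p * besov_norm \<beta> \<nu> h)))"
    proof -
      have "m * L \<le> m * (R powr p * besov_norm \<beta> \<nu> h)" using bL2 m0 by (rule mult_left_mono)
      then have "(\<integral>x. h x * hc x \<partial>\<nu>) \<le> m * (R powr p * besov_norm \<beta> \<nu> h)" using I1' by linarith
      then show ?thesis using E0 Rp by (intro mult_left_mono) auto
    qed
    also have "\<dots> = E * m * besov_norm \<beta> \<nu> h" using Rp by (simp add: field_simps)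
    finally show ?thesis unfolding E_def m_def p_def F_def .
  qed
qed

end
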